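(* Let $\omega\in\Omega$. Let $x\in\mathbb{Z}^2$ lie in an infinite $0$-cluster and $y\in\mathbb{Z}^2$ lie in an infinite $1$-cluster, and let $\ell_{xy}$ be a path of edges of $G$ from $x$ to $y$. Then the total number of crossings of $\ell_{xy}$ with infinite contours of $\phi(\omega)$ (i.e. the number of edges of $\ell_{xy}$, counted with multiplicity, crossed by an edge belonging to an infinite contour) is odd. In particular, if $\omega$ has both an infinite $0$-cluster and an infinite $1$-cluster, then $\phi(\omega)$ has an infinite contour.
   Context: Let $G$ be the square grid with vertex set $\mathbb{Z}^2$ and nearest-neighbour edges. The face of $G$ with lower-left corner $(m,n)$ is black if $m+n$ is even, white otherwise. $\Omega\subset\{0,1\}^{\mathbb{Z}^2}$ is the set of $\omega$ such that for every black face the states of its four vertices, listed clockwise from the lower-left corner, form one of $0000,1111,0011,1100,0110,1001$. A cluster of $\omega$ is a maximal $G$-connected set of vertices on which $\omega$ is constant ($0$- or $1$-cluster), infinite if it has infinitely many vertices. Let $\mathbb{L}_1$ have vertices $(m-\tfrac12,n+\tfrac12)$, $m,n$ both even, and $\mathbb{L}_2$ vertices $(m-\tfrac12,n+\tfrac12)$, $m,n$ both odd; in each, two vertices are joined by an edge (a segment of length $2$) iff at Euclidean distance $2$. Every edge of $G$ is crossed by exactly one edge of $\mathbb{L}_1\cup\mathbb{L}_2$. The center of each black face $F$ is the midpoint of exactly one edge $e_1$ of $\mathbb{L}_1$ and one edge $e_2$ of $\mathbb{L}_2$. Define $\phi(\omega)\in\{0,1\}^{E(\mathbb{L}_1)\cup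 E(\mathbb{L}_2)}$: if the configuration around $F$ is $0000$ or $1111$ both get $0$; if the two upper vertices share a state different from the two lower ones, the horizontal one of $e_1,e_2$ gets $1$, the vertical $0$; if the two left vertices share a state different from the two right ones, the vertical one gets $1$, the horizontal $0$. Edges with value $1$ are present; a contour is a connected component of the set of present edges, infinite if it has infinitely many edges. *)

theory Defs
  imports Main
begin

text \<open>Vertices of G are points of int x int. States: False = 0, True = 1.\<close>

type_synonym vtx = "int \<times> int"

definition adjG :: "vtx \<Rightarrow> vtx \<Rightarrow> bool" where
  "adjG u v \<longleftrightarrow> \<bar>fst u - fst v\<bar> + \<bar>snd u - snd v\<bar> = 1"

text \<open>Black face with lower-left corner (a,b): a+b even. Vertices clockwise from the
 lower-left: (a,b), (a,b+1), (a+1,b+1), (a+1,b).\<close>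

definition allowed_face :: "bool \<Rightarrow> bool \<Rightarrow> bool \<Rightarrow> bool \<Rightarrow> bool" where
  "allowed_face p q r s \<longleftrightarrow>
     (p, q, r, s) \<in> {(False, False, False, False), (True, True, True, True),
                     (False, False, True, True), (True, True, False, False),
                     (False, True, True, False), (True, False, False, True)}"

definition Omega :: "(vtx \<Rightarrow> bool) set" where
  "Omega = {\<omega>. \<forall>a b. even (a + b) \<longrightarrow>
      allowed_face (\<omega> (a, b)) (\<omega> (a, b + 1)) (\<omega> (a + 1, b + 1)) (\<omega> (a + 1, b))}"

definition cluster :: "(vtx \<Rightarrow> bool) \<Rightarrow> vtx \<Rightarrow> vtx set" where
  "cluster \<omega> x = {y. (\<lambda>u v. adjG u v \<and> \<omega> u = \<omega> v)\<^sup>*\<^sup>* x y}"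

definition in_infinite_cluster :: "(vtx \<Rightarrow> bool) \<Rightarrow> bool \<Rightarrow> vtx \<Rightarrow> bool" where
  "in_infinite_cluster \<omega> s x \<longleftrightarrow> \<omega> x = s \<and> infinite (cluster \<omega> x)"

text \<open>Dual lattices: the vertex (m - 1/2, n + 1/2) of L1 (m,n even) or L2 (m,n odd) is
 encoded by the integer pair (m,n).\<close>

definition dual_vertex :: "vtx \<Rightarrow> bool" where
  "dual_vertex p \<longleftrightarrow> even (fst p) = even (snd p)"

definition dual_edges :: "vtx set set" where
  "dual_edges = {{p, q} | p q. dual_vertex p \<and> dual_vertex q \<and>
      ((fst q = fst p + 2 \<and> snd q = snd p) \<or> (fst q = fst p \<and> snd q = snd p + 2))}"

text \<open>For the black face with lower-left (a,b) (a+b even) the horizontal dual edge through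
 its center is {(a,b),(a+2,b)} (real endpoints (a-1/2,b+1/2),(a+3/2,b+1/2)) and the vertical
 one is {(a+1,b-1),(a+1,b+1)} (real endpoints (a+1/2,b-1/2),(a+1/2,b+3/2)).\<close>

definition hdual :: "int \<Rightarrow> int \<Rightarrow> vtx set" where
  "hdual a b = {(a, b), (a + 2, b)}"

definition vdual :: "int \<Rightarrow> int \<Rightarrow> vtx set" where
  "vdual a b = {(a + 1, b - 1), (a + 1, b + 1)}"

text \<open>phi(omega): the set of dual edges with value 1.\<close>

definition present :: "(vtx \<Rightarrow> bool) \<Rightarrow> vtx set set" where
  "present \<omega> =
     {hdual a b | a b. even (a + b) \<and>
        \<omega> (a, b + 1) = \<omega> (a + 1, b + 1) \<and> \<omega> (a, b) = \<omega> (a + 1, b) \<and>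
        \<omega> (a, b + 1) \<noteq> \<omega> (a, b)}
   \<union> {vdual a b | a b. even (a + b) \<and>
        \<omega> (a, b) = \<omega> (a, b + 1) \<and> \<omega> (a + 1, b) = \<omega> (a + 1, b + 1) \<and>
        \<omega> (a, b) \<noteq> \<omega> (a + 1, b)}"

definition contour :: "(vtx \<Rightarrow> bool) \<Rightarrow> vtx set \<Rightarrow> vtx set set" where
  "contour \<omega> e =
     {f. (\<lambda>g h. g \<in> present \<omega> \<and> h \<in> present \<omega> \<and> g \<inter> h \<noteq> {})\<^sup>*\<^sup>* e f}"

definition in_infinite_contour :: "(vtx \<Rightarrow> bool) \<Rightarrow> vtx set \<Rightarrow> bool" where
  "in_infinite_contour \<omega> e \<longleftrightarrow> e \<in> present \<omega> \<and> infinite (contour \<omega> e)"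

definition crosses :: "vtx set \<Rightarrow> vtx set \<Rightarrow> bool" where
  "crosses d p \<longleftrightarrow> (\<exists>a b. even (a + b) \<and>
     ((d = hdual a b \<and> (p = {(a, b), (a, b + 1)} \<or> p = {(a + 1, b), (a + 1, b + 1)})) \<or>
      (d = vdual a b \<and> (p = {(a, b), (a + 1, b)} \<or> p = {(a, b + 1), (a + 1, b + 1)}))))"

definition Gpath :: "vtx list \<Rightarrow> bool" where
  "Gpath xs \<longleftrightarrow> xs \<noteq> [] \<and> (\<forall>i. Suc i < length xs \<longrightarrow> adjG (xs ! i) (xs ! Suc i))"

definition inf_crossings :: "(vtx \<Rightarrow> bool) \<Rightarrow> vtx list \<Rightarrow> nat" where
  "inf_crossings \<omega> xs = card {i. Suc i < length xs \<and>
     (\<exists>d. in_infinite_contour \<omega> d \<and> crosses d {xs ! i, xs ! Suc i})}"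

end

theory Submission imports Defs begin
lemma hdual_inj[simp]: "hdual a b = hdual c e \<longleftrightarrow> a = c \<and> b = e"
  unfolding hdual_def by (auto simp: doubleton_eq_iff)
lemma vdual_inj[simp]: "vdual a b = vdual c e \<longleftrightarrow> a = c \<and> b = e"
  unfolding vdual_def by (auto simp: doubleton_eq_iff)
lemma hv_ne[simp]: "hdual a b \<noteq> vdual c e" "vdual c e \<noteq> hdual a b"
  unfolding vdual_def hdual_def by (auto simp: doubleton_eq_iff)

lemma e1: "{(i::int,j::int),(i+1,j)} = {(a, b), (a, b + 1)} \<longleftrightarrow> False" by (auto simp: doubleton_eq_iff)
lemma e2: "{(i::int,j::int),(i+1,j)} = {(a+1, b), (a+1, b + 1)} \<longleftrightarrow> False" by (auto simp: doubleton_eq_iff)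
lemma e3: "{(i::int,j::int),(i+1,j)} = {(a, b), (a+1, b)} \<longleftrightarrow> a = i \<and> b = j" by (auto simp: doubleton_eq_iff)
lemma e4: "{(i::int,j::int),(i+1,j)} = {(a, b+1), (a+1, b+1)} \<longleftrightarrow> a = i \<and> b = j - 1" by (auto simp: doubleton_eq_iff)
lemma f1: "{(i::int,j::int),(i,j+1)} = {(a, b), (a, b + 1)} \<longleftrightarrow> a = i \<and> b = j" by (auto simp: doubleton_eq_iff)
lemma f2: "{(i::int,j::int),(i,j+1)} = {(a+1, b), (a+1, b + 1)} \<longleftrightarrow> a = i - 1 \<and> b = j" by (auto simp: doubleton_eq_iff)
lemma f3: "{(i::int,j::int),(i,j+1)} = {(a, b), (a+1, b)} \<longleftrightarrow> False" by (auto simp: doubleton_eq_iff)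
lemma f4: "{(i::int,j::int),(i,j+1)} = {(a, b+1), (a+1, b+1)} \<longleftrightarrow> False" by (auto simp: doubleton_eq_iff)

lemma cross_h: "crosses d {(i,j),(i+1,j)} \<longleftrightarrow>
   (even (i+j) \<and> d = vdual i j) \<or> (odd (i+j) \<and> d = vdual i (j-1))"
proof -
  have "crosses d {(i,j),(i+1,j)} \<longleftrightarrow> (\<exists>a b. even (a+b) \<and> ((d = vdual a b \<and> (a = i \<and> b = j \<or> a = i \<and> b + 1 = j))))"
    unfolding crosses_def e1 e2 e3 e4 by blast
  also have "\<dots> \<longleftrightarrow> (even (i+j) \<and> d = vdual i j) \<or> (odd (i+j) \<and> d = vdual i (j-1))"
    by auto
  finally show ?thesis .
qed

lemma cross_v: "crosses d {(i,j),(i,j+1)} \<longleftrightarrow>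
   (even (i+j) \<and> d = hdual i j) \<or> (odd (i+j) \<and> d = hdual (i-1) j)"
proof -
  have "crosses d {(i,j),(i,j+1)} \<longleftrightarrow> (\<exists>a b. even (a+b) \<and> ((d = hdual a b \<and> (a = i \<and> b = j \<or> a + 1 = i \<and> b = j))))"
    unfolding crosses_def f1 f2 f3 f4 by blast
  also have "\<dots> \<longleftrightarrow> (even (i+j) \<and> d = hdual i j) \<or> (odd (i+j) \<and> d = hdual (i-1) j)"
    by auto
  finally show ?thesis .
qed

lemma Om: "\<omega> \<in> Omega \<Longrightarrow> even (a+b) \<Longrightarrow>
   allowed_face (\<omega> (a, b)) (\<omega> (a, b + 1)) (\<omega> (a + 1, b + 1)) (\<omega> (a + 1, b))"
  unfolding Omega_def by blast

lemma af: "allowed_face p q r s \<longleftrightarrow> (p \<noteq> q \<longleftrightarrow> s \<noteq> r) \<and> (p \<noteq> s \<longleftrightarrow> q \<noteq> r) \<and> \<not>(p \<noteq> q \<and> p \<noteq> s)"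
  unfolding allowed_face_def by (cases p; cases q; cases r; cases s) auto

lemma P_h: assumes "\<omega> \<in> Omega"
  shows "hdual a b \<in> present \<omega> \<longleftrightarrow> even (a+b) \<and> \<omega> (a,b) \<noteq> \<omega> (a,b+1)"
proof -
  have "hdual a b \<in> present \<omega> \<longleftrightarrow> even (a + b) \<and>
        \<omega> (a, b + 1) = \<omega> (a + 1, b + 1) \<and> \<omega> (a, b) = \<omega> (a + 1, b) \<and>
        \<omega> (a, b + 1) \<noteq> \<omega> (a, b)"
    unfolding present_def by auto
  also have "\<dots> \<longleftrightarrow> even (a+b) \<and> \<omega> (a,b) \<noteq> \<omega> (a,b+1)"
    using Om[OF assms, of a b] unfolding af by auto
  finally show ?thesis .
qed

lemma P_v: assumes "\<omega> \<in> Omega"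
  shows "vdual a b \<in> present \<omega> \<longleftrightarrow> even (a+b) \<and> \<omega> (a,b) \<noteq> \<omega> (a+1,b)"
proof -
  have "vdual a b \<in> present \<omega> \<longleftrightarrow> even (a + b) \<and>
        \<omega> (a, b) = \<omega> (a, b + 1) \<and> \<omega> (a + 1, b) = \<omega> (a + 1, b + 1) \<and>
        \<omega> (a, b) \<noteq> \<omega> (a + 1, b)"
    unfolding present_def by auto
  also have "\<dots> \<longleftrightarrow> even (a+b) \<and> \<omega> (a,b) \<noteq> \<omega> (a+1,b)"
    using Om[OF assms, of a b] unfolding af by auto
  finally show ?thesis .
qed

lemma P_h2: "\<omega> \<in> Omega \<Longrightarrow> even (a+b) \<Longrightarrow> \<omega> (a,b) \<noteq> \<omega> (a,b+1) \<longleftrightarrow> \<omega> (a+1,b) \<noteq> \<omega> (a+1,b+1)"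
  using Om[of \<omega> a b] unfolding af by auto
lemma P_v2: "\<omega> \<in> Omega \<Longrightarrow> even (a+b) \<Longrightarrow> \<omega> (a,b) \<noteq> \<omega> (a+1,b) \<longleftrightarrow> \<omega> (a,b+1) \<noteq> \<omega> (a+1,b+1)"
  using Om[of \<omega> a b] unfolding af by auto

lemma P_shape: "d \<in> present \<omega> \<Longrightarrow> (\<exists>a b. even (a+b) \<and> d = hdual a b) \<or> (\<exists>a b. even (a+b) \<and> d = vdual a b)"
  unfolding present_def by blast

lemma P_finite: "d \<in> present \<omega> \<Longrightarrow> finite d"
  using P_shape[of d \<omega>] unfolding hdual_def vdual_def by auto

lemma card4:
  assumes "x1 \<noteq> x2" "x1 \<noteq> x3" "x1 \<noteq> x4" "x2 \<noteq> x3" "x2 \<noteq> x4" "x3 \<noteq> x4"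
  shows "card {d. (d = x1 \<and> c1) \<or> (d = x2 \<and> c2) \<or> (d = x3 \<and> c3) \<or> (d = x4 \<and> c4)}
     = of_bool c1 + of_bool c2 + of_bool c3 + of_bool c4"
proof -
  have "{d. (d = x1 \<and> c1) \<or> (d = x2 \<and> c2) \<or> (d = x3 \<and> c3) \<or> (d = x4 \<and> c4)}
     = (if c1 then {x1} else {}) \<union> ((if c2 then {x2} else {}) \<union> ((if c3 then {x3} else {}) \<union> (if c4 then {x4} else {})))"
    by auto
  also have "card \<dots> = of_bool c1 + (of_bool c2 + (of_bool c3 + of_bool c4))"
    using assms by (simp add: card_Un_disjoint)
  finally show ?thesis by simp
qed

lemma par4: "even (of_bool (b\<noteq>c) + of_bool (a\<noteq>e) + of_bool(e\<noteq>c) + of_bool (a \<noteq> (b::bool)) :: nat)"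
  by (cases a; cases b; cases c; cases e) auto

lemma degree_even: assumes "\<omega> \<in> Omega" shows "even (card {d \<in> present \<omega>. q \<in> d})"
proof -
  obtain m n where q: "q = (m,n)" by fastforce
  have "{d \<in> present \<omega>. q \<in> d} = {d. (d = hdual m n \<and> hdual m n \<in> present \<omega>) \<or>
     (d = hdual (m-2) n \<and> hdual (m-2) n \<in> present \<omega>) \<or>
     (d = vdual (m-1) (n+1) \<and> vdual (m-1) (n+1) \<in> present \<omega>) \<or>
     (d = vdual (m-1) (n-1) \<and> vdual (m-1) (n-1) \<in> present \<omega>)}" (is "?L = ?R")
  proof
    show "?L \<subseteq> ?R"
    proof
      fix d assume d: "d \<in> ?L"
      then have dP: "d \<in> present \<omega>" "q \<in> d" by auto
      from P_shape[OF dP(1)] show "d \<in> ?R"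
      proof
        assume "\<exists>a b. even (a+b) \<and> d = hdual a b"
        then obtain a b where db: "d = hdual a b" by blast
        with dP q have "(a = m \<and> b = n) \<or> (a = m - 2 \<and> b = n)" unfolding hdual_def by auto
        then show ?thesis using db dP(1) by (elim disjE) simp_all
      next
        assume "\<exists>a b. even (a+b) \<and> d = vdual a b"
        then obtain a b where db: "d = vdual a b" by blast
        with dP q have "(a = m - 1 \<and> b = n + 1) \<or> (a = m - 1 \<and> b = n - 1)" unfolding vdual_def by auto
        then show ?thesis using db dP(1) by (elim disjE) simp_all
      qed
    qed
  next
    have "q \<in> hdual m n" "q \<in> hdual (m-2) n" "q \<in> vdual (m-1) (n+1)" "q \<in> vdual (m-1) (n-1)"
      using q unfolding hdual_def vdual_def by auto
    then show "?R \<subseteq> ?L" by blast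
  qed
  also have "card \<dots> = of_bool (hdual m n \<in> present \<omega>) + of_bool (hdual (m-2) n \<in> present \<omega>)
     + of_bool (vdual (m-1) (n+1) \<in> present \<omega>) + of_bool (vdual (m-1) (n-1) \<in> present \<omega>)"
    by (rule card4) auto
  finally have eq: "card {d \<in> present \<omega>. q \<in> d} = \<dots>" .
  show ?thesis
  proof (cases "even (m+n)")
    case True
    have e1: "even ((m-2)+n)" "even ((m-1)+(n+1))" "even ((m-1)+(n-1))" using True by auto
    have h1: "\<omega> (m-2,n) \<noteq> \<omega> (m-2,n+1) \<longleftrightarrow> \<omega> (m-1,n) \<noteq> \<omega> (m-1,n+1)"
      using P_h2[OF assms e1(1)] by simp
    have h2: "\<omega> (m-1,n-1) \<noteq> \<omega> (m,n-1) \<longleftrightarrow> \<omega> (m-1,n) \<noteq> \<omega> (m,n)"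
      using P_v2[OF assms e1(3)] by simp
    have "hdual m n \<in> present \<omega> \<longleftrightarrow> \<omega> (m,n) \<noteq> \<omega> (m,n+1)"
      using True P_h[OF assms] by simp
    moreover have "hdual (m-2) n \<in> present \<omega> \<longleftrightarrow> \<omega> (m-1,n) \<noteq> \<omega> (m-1,n+1)"
      using e1 h1 P_h[OF assms] by simp
    moreover have "vdual (m-1) (n+1) \<in> present \<omega> \<longleftrightarrow> \<omega> (m-1,n+1) \<noteq> \<omega> (m,n+1)"
      using e1 P_v[OF assms] by simp
    moreover have "vdual (m-1) (n-1) \<in> present \<omega> \<longleftrightarrow> \<omega> (m-1,n) \<noteq> \<omega> (m,n)"
      using e1 h2 P_v[OF assms] by simp
    ultimately show ?thesis unfolding eq using par4[of "\<omega> (m,n)" "\<omega> (m,n+1)" "\<omega> (m-1,n)" "\<omega> (m-1,n+1)"]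
      by simp
  next
    case False
    then show ?thesis unfolding eq P_h[OF assms] P_v[OF assms] by auto
  qed
qed

lemma handshake:
  assumes fK: "finite K" and fd: "\<And>d. d \<in> K \<Longrightarrow> finite d"
    and ev: "\<And>q. q \<in> \<Union>K \<Longrightarrow> even (card {d\<in>K. q \<in> d})"
  shows "even (\<Sum>d\<in>K. card (d \<inter> Q))"
proof -
  let ?V = "\<Union>K \<inter> Q"
  have fV: "finite ?V" using fK fd by auto
  have "(\<Sum>d\<in>K. card (d \<inter> Q)) = (\<Sum>d\<in>K. \<Sum>q\<in>?V. of_bool (q \<in> d))"
  proof (rule sum.cong[OF refl])
    fix d assume "d \<in> K"
    then have "?V \<inter> {q. q \<in> d} = d \<inter> Q" by auto
    then show "card (d \<inter> Q) = (\<Sum>q\<in>?V. of_bool (q \<in> d))" using fV by simp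
  qed
  also have "\<dots> = (\<Sum>q\<in>?V. \<Sum>d\<in>K. of_bool (q \<in> d))" by (rule sum.swap)
  also have "\<dots> = (\<Sum>q\<in>?V. card {d\<in>K. q \<in> d})"
  proof (rule sum.cong[OF refl])
    fix q
    have "K \<inter> {d. q \<in> d} = {d\<in>K. q \<in> d}" by auto
    then show "(\<Sum>d\<in>K. of_bool (q \<in> d)) = card {d\<in>K. q \<in> d}" using fK by simp
  qed
  finally show ?thesis using ev by (auto intro!: dvd_sum)
qed


definition closedK :: "(vtx \<Rightarrow> bool) \<Rightarrow> vtx set set \<Rightarrow> bool" where
  "closedK \<omega> K \<longleftrightarrow> K \<subseteq> present \<omega> \<and> finite K \<and> (\<forall>d\<in>K. \<forall>d'\<in>present \<omega>. d \<inter> d' \<noteq> {} \<longrightarrow> d' \<in> K)"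

definition Vb :: "vtx set set \<Rightarrow> int \<Rightarrow> int \<Rightarrow> vtx set set" where
  "Vb K i b = {d\<in>K. \<exists>a. a \<ge> i \<and> d = vdual a b}"

definition hK :: "vtx set set \<Rightarrow> vtx \<Rightarrow> bool" where
  "hK K u = odd (card (Vb K (fst u) (snd u)) + card (Vb K (fst u) (snd u - 1)))"

lemma K_deg: assumes "\<omega> \<in> Omega" "closedK \<omega> K" "q \<in> \<Union>K"
  shows "even (card {d\<in>K. q \<in> d})"
proof -
  from assms(3) obtain d0 where d0: "d0 \<in> K" "q \<in> d0" by blast
  have "{d\<in>K. q \<in> d} = {d\<in>present \<omega>. q \<in> d}"
    using assms(2) d0 unfolding closedK_def by blast
  then show ?thesis using degree_even[OF assms(1)] by simp
qed

lemma Kv_par: "\<omega> \<in> Omega \<Longrightarrow> closedK \<omega> K \<Longrightarrow> vdual a b \<in> K \<Longrightarrow> even (a+b)"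
  using P_v unfolding closedK_def by blast
lemma Kh_par: "\<omega> \<in> Omega \<Longrightarrow> closedK \<omega> K \<Longrightarrow> hdual a b \<in> K \<Longrightarrow> even (a+b)"
  using P_h unfolding closedK_def by blast

lemma Vb_step: assumes "finite K"
  shows "card (Vb K i b) = card (Vb K (i+1) b) + of_bool (vdual i b \<in> K)"
proof -
  have fin: "finite (Vb K (i+1) b)" using assms unfolding Vb_def by auto
  have nin: "vdual i b \<notin> Vb K (i+1) b" unfolding Vb_def by auto
  have "Vb K i b = Vb K (i+1) b \<union> (if vdual i b \<in> K then {vdual i b} else {})"
  proof (intro set_eqI iffI)
    fix d assume "d \<in> Vb K i b"
    then obtain a where a: "d \<in> K" "a \<ge> i" "d = vdual a b" unfolding Vb_def by blast
    then have "a = i \<or> a \<ge> i + 1" by arith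
    then show "d \<in> Vb K (i+1) b \<union> (if vdual i b \<in> K then {vdual i b} else {})"
      using a unfolding Vb_def by auto
  next
    fix d assume "d \<in> Vb K (i+1) b \<union> (if vdual i b \<in> K then {vdual i b} else {})"
    then show "d \<in> Vb K i b" unfolding Vb_def by (auto split: if_splits)
  qed
  then show ?thesis using fin nin by simp
qed

lemma hstep: assumes "\<omega> \<in> Omega" "closedK \<omega> K"
  shows "hK K (i,j) \<noteq> hK K (i+1,j) \<longleftrightarrow> (\<exists>d\<in>K. crosses d {(i,j),(i+1,j)})"
proof -
  have fK: "finite K" using assms(2) unfolding closedK_def by auto
  have c: "(\<exists>d\<in>K. crosses d {(i,j),(i+1,j)}) \<longleftrightarrow> (even (i+j) \<and> vdual i j \<in> K) \<or> (odd (i+j) \<and> vdual i (j-1) \<in> K)"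
    unfolding cross_h by auto
  have p1: "vdual i j \<in> K \<Longrightarrow> even (i+j)" using Kv_par[OF assms] by blast
  have p2: "vdual i (j-1) \<in> K \<Longrightarrow> odd (i+j)" using Kv_par[OF assms, of i "j-1"] by auto
  show ?thesis unfolding c hK_def fst_conv snd_conv Vb_step[OF fK, of i j] Vb_step[OF fK, of i "j-1"]
    using p1 p2 by auto
qed

lemma card2: "u \<noteq> v \<Longrightarrow> card ({u,v} \<inter> Q) = of_bool (u \<in> Q) + of_bool (v \<in> Q)"
  by (cases "u \<in> Q"; cases "v \<in> Q") auto

lemma memS: assumes "\<omega> \<in> Omega" "closedK \<omega> K" "d \<in> K"
  shows "odd (card (d \<inter> {p. snd p = j \<and> fst p \<ge> i+1})) \<longleftrightarrow>
     d \<in> Vb K i (j-1) \<or> d \<in> Vb K i (j+1) \<or> d = hdual i j \<or> d = hdual (i-1) j"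
proof -
  have dP: "d \<in> present \<omega>" using assms(2,3) unfolding closedK_def by auto
  from P_shape[OF dP] show ?thesis
  proof
    assume "\<exists>a b. even (a+b) \<and> d = hdual a b"
    then obtain a b where d: "d = hdual a b" by blast
    have "card (d \<inter> {p. snd p = j \<and> fst p \<ge> i+1}) = of_bool (b = j \<and> a \<ge> i+1) + of_bool (b = j \<and> a + 2 \<ge> i+1)"
      unfolding d hdual_def by (subst card2) auto
    moreover have "d \<notin> Vb K i (j-1)" "d \<notin> Vb K i (j+1)" unfolding Vb_def d by auto
    ultimately show ?thesis unfolding d by auto
  next
    assume "\<exists>a b. even (a+b) \<and> d = vdual a b"
    then obtain a b where d: "d = vdual a b" by blast
    have "card (d \<inter> {p. snd p = j \<and> fst p \<ge> i+1}) = of_bool (b - 1 = j \<and> a \<ge> i) + of_bool (b + 1 = j \<and> a \<ge> i)"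
      unfolding d vdual_def by (subst card2) auto
    moreover have "d \<in> Vb K i (j-1) \<longleftrightarrow> a \<ge> i \<and> b = j - 1" "d \<in> Vb K i (j+1) \<longleftrightarrow> a \<ge> i \<and> b = j+1"
      unfolding Vb_def d using assms(3) d by auto
    ultimately show ?thesis unfolding d by auto
  qed
qed

lemma vstep: assumes "\<omega> \<in> Omega" "closedK \<omega> K"
  shows "hK K (i,j) \<noteq> hK K (i,j+1) \<longleftrightarrow> (\<exists>d\<in>K. crosses d {(i,j),(i,j+1)})"
proof -
  have fK: "finite K" and KP: "K \<subseteq> present \<omega>" using assms(2) unfolding closedK_def by auto
  let ?Q = "{p. snd p = j \<and> fst p \<ge> i+1}"
  let ?H = "{d\<in>K. d = hdual i j \<or> d = hdual (i-1) j}"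
  have "even (\<Sum>d\<in>K. card (d \<inter> ?Q))"
    by (rule handshake[OF fK]) (use KP P_finite K_deg[OF assms] in auto)
  then have ev: "even (card {d\<in>K. odd (card (d \<inter> ?Q))})" using even_sum_iff[OF fK, of "\<lambda>d. card (d \<inter> ?Q)"] by blast
  have S: "{d\<in>K. odd (card (d \<inter> ?Q))} = Vb K i (j-1) \<union> (Vb K i (j+1) \<union> ?H)"
    using memS[OF assms] unfolding Vb_def by blast
  have f1: "finite (Vb K i b)" for b using fK unfolding Vb_def by auto
  have d1: "Vb K i (j-1) \<inter> (Vb K i (j+1) \<union> ?H) = {}" unfolding Vb_def by auto
  have d2: "Vb K i (j+1) \<inter> ?H = {}" unfolding Vb_def by auto
  have cH: "card ?H = of_bool (hdual i j \<in> K) + of_bool (hdual (i-1) j \<in> K)"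
  proof -
    have "?H = (if hdual i j \<in> K then {hdual i j} else {}) \<union> (if hdual (i-1) j \<in> K then {hdual (i-1) j} else {})"
      by auto
    then show ?thesis by simp
  qed
  have cS: "card {d\<in>K. odd (card (d \<inter> ?Q))} = card (Vb K i (j-1)) + card (Vb K i (j+1)) + of_bool (hdual i j \<in> K) + of_bool (hdual (i-1) j \<in> K)"
    unfolding S using d1 d2 f1 fK cH by (simp add: card_Un_disjoint)
  have c: "(\<exists>d\<in>K. crosses d {(i,j),(i,j+1)}) \<longleftrightarrow> (even (i+j) \<and> hdual i j \<in> K) \<or> (odd (i+j) \<and> hdual (i-1) j \<in> K)"
    unfolding cross_v by auto
  have p1: "hdual i j \<in> K \<Longrightarrow> even (i+j)" using Kh_par[OF assms] by blast
  have p2: "hdual (i-1) j \<in> K \<Longrightarrow> odd (i+j)" using Kh_par[OF assms, of "i-1" j] by auto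
  show ?thesis unfolding c hK_def fst_conv snd_conv using ev cS p1 p2 by auto
qed


lemma adj_cases: assumes "adjG u v" "\<And>i j. Q (i,j) (i+1,j)" "\<And>i j. Q (i,j) (i,j+1)"
  "\<And>u v. Q u v \<Longrightarrow> Q v u" shows "Q u v"
proof -
  obtain a b c e where u: "u = (a,b)" and v: "v = (c,e)" by fastforce
  from assms(1) have "\<bar>a - c\<bar> + \<bar>b - e\<bar> = 1" unfolding adjG_def u v by simp
  then have "(c = a+1 \<and> e = b) \<or> (a = c+1 \<and> e = b) \<or> (c = a \<and> e = b+1) \<or> (c = a \<and> b = e+1)" by arith
  then show ?thesis unfolding u v using assms(2,3,4) by (elim disjE) auto
qed

lemma hK_adj: assumes "\<omega> \<in> Omega" "closedK \<omega> K" "adjG u v"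
  shows "hK K u \<noteq> hK K v \<longleftrightarrow> (\<exists>d\<in>K. crosses d {u,v})"
  using assms(3)
proof (rule adj_cases)
  fix u v assume "hK K u \<noteq> hK K v \<longleftrightarrow> (\<exists>d\<in>K. crosses d {u,v})"
  then show "hK K v \<noteq> hK K u \<longleftrightarrow> (\<exists>d\<in>K. crosses d {v,u})" by (auto simp add: insert_commute)
qed (use hstep[OF assms(1,2)] vstep[OF assms(1,2)] in auto)

lemma P_adj: assumes "\<omega> \<in> Omega" "adjG u v"
  shows "(\<exists>d\<in>present \<omega>. crosses d {u,v}) \<longleftrightarrow> \<omega> u \<noteq> \<omega> v"
  using assms(2)
proof (rule adj_cases)
  fix u v assume "(\<exists>d\<in>present \<omega>. crosses d {u,v}) \<longleftrightarrow> \<omega> u \<noteq> \<omega> v"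
  then show "(\<exists>d\<in>present \<omega>. crosses d {v,u}) \<longleftrightarrow> \<omega> v \<noteq> \<omega> u" by (auto simp add: insert_commute)
next
  fix i j
  have c: "(\<exists>d\<in>present \<omega>. crosses d {(i,j),(i+1,j)}) \<longleftrightarrow> (even (i+j) \<and> vdual i j \<in> present \<omega>) \<or> (odd (i+j) \<and> vdual i (j-1) \<in> present \<omega>)"
    unfolding cross_h by auto
  have "odd (i+j) \<Longrightarrow> \<omega> (i,j-1) \<noteq> \<omega> (i+1,j-1) \<longleftrightarrow> \<omega> (i,j) \<noteq> \<omega> (i+1,j)"
    using P_v2[OF assms(1), of i "j-1"] by auto
  then show "(\<exists>d\<in>present \<omega>. crosses d {(i,j),(i+1,j)}) \<longleftrightarrow> \<omega> (i,j) \<noteq> \<omega> (i+1,j)"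
    unfolding c P_v[OF assms(1)] by auto
next
  fix i j
  have c: "(\<exists>d\<in>present \<omega>. crosses d {(i,j),(i,j+1)}) \<longleftrightarrow> (even (i+j) \<and> hdual i j \<in> present \<omega>) \<or> (odd (i+j) \<and> hdual (i-1) j \<in> present \<omega>)"
    unfolding cross_v by auto
  have "odd (i+j) \<Longrightarrow> \<omega> (i-1,j) \<noteq> \<omega> (i-1,j+1) \<longleftrightarrow> \<omega> (i,j) \<noteq> \<omega> (i,j+1)"
    using P_h2[OF assms(1), of "i-1" j] by auto
  then show "(\<exists>d\<in>present \<omega>. crosses d {(i,j),(i,j+1)}) \<longleftrightarrow> \<omega> (i,j) \<noteq> \<omega> (i,j+1)"
    unfolding c P_h[OF assms(1)] by auto
qed

lemma cross_unique: assumes "adjG u v"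
  shows "\<forall>d d'. crosses d {u,v} \<and> crosses d' {u,v} \<longrightarrow> d = d'"
  using assms
proof (rule adj_cases)
  fix u v assume "\<forall>d d'. crosses d {u,v} \<and> crosses d' {u,v} \<longrightarrow> d = d'"
  then show "\<forall>d d'. crosses d {v,u} \<and> crosses d' {v,u} \<longrightarrow> d = d'" by (simp add: insert_commute)
qed (auto simp: cross_h cross_v)

lemma cross_fin: assumes "adjG u v" shows "finite {d. crosses d {u,v}}"
proof (cases "{d. crosses d {u,v}} = {}")
  case False
  then obtain d0 where "crosses d0 {u,v}" by blast
  then have "{d. crosses d {u,v}} \<subseteq> {d0}" using cross_unique[OF assms] by blast
  then show ?thesis using finite_subset by blast
qed simp

definition cnt :: "(vtx \<Rightarrow> vtx \<Rightarrow> bool) \<Rightarrow> vtx list \<Rightarrow> nat" where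
  "cnt c xs = card {i. Suc i < length xs \<and> c (xs!i) (xs!Suc i)}"

lemma cnt_single: "cnt c [x] = 0" unfolding cnt_def by simp

lemma cnt_Cons2: "cnt c (x#y#ys) = of_bool (c x y) + cnt c (y#ys)"
proof -
  let ?A = "{i. Suc i < length (y#ys) \<and> c ((y#ys)!i) ((y#ys)!Suc i)}"
  have "{i. Suc i < length (x#y#ys) \<and> c ((x#y#ys)!i) ((x#y#ys)!Suc i)} = (if c x y then {0} else {}) \<union> Suc ` ?A"
  proof (intro set_eqI iffI)
    fix i assume "i \<in> {i. Suc i < length (x#y#ys) \<and> c ((x#y#ys)!i) ((x#y#ys)!Suc i)}"
    then show "i \<in> (if c x y then {0} else {}) \<union> Suc ` ?A" by (cases i) auto
  qed (auto split: if_splits)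
  moreover have "finite ?A" by (rule finite_subset[of _ "{..<length (y#ys)}"]) auto
  ultimately show ?thesis unfolding cnt_def by (simp add: card_image)
qed

lemma cnt_parity: "odd (cnt (\<lambda>u v. g u \<noteq> (g v::bool)) (x#ys)) \<longleftrightarrow> g x \<noteq> g (last (x#ys))"
proof (induction ys arbitrary: x)
  case Nil
  then show ?case by (simp add: cnt_single)
next
  case (Cons y ys)
  then show ?case unfolding cnt_Cons2 by (cases "g x"; cases "g y"; cases "g (last (y#ys))") auto
qed

lemma cnt_cong: "(\<And>i. Suc i < length xs \<Longrightarrow> c1 (xs!i) (xs!Suc i) \<longleftrightarrow> c2 (xs!i) (xs!Suc i)) \<Longrightarrow> cnt c1 xs = cnt c2 xs"
  unfolding cnt_def by (metis (no_types, lifting))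

lemma cnt_disj: assumes "\<And>i. Suc i < length xs \<Longrightarrow> \<not> (c1 (xs!i) (xs!Suc i) \<and> c2 (xs!i) (xs!Suc i))"
  shows "cnt (\<lambda>u v. c1 u v \<or> c2 u v) xs = cnt c1 xs + cnt c2 xs"
proof -
  let ?A = "{i. Suc i < length xs \<and> c1 (xs!i) (xs!Suc i)}"
  let ?B = "{i. Suc i < length xs \<and> c2 (xs!i) (xs!Suc i)}"
  have "{i. Suc i < length xs \<and> (c1 (xs!i) (xs!Suc i) \<or> c2 (xs!i) (xs!Suc i))} = ?A \<union> ?B" by auto
  moreover have "finite ?A" "finite ?B" by (rule finite_subset[of _ "{..<length xs}"], auto)+
  moreover have "?A \<inter> ?B = {}" using assms by auto
  ultimately show ?thesis unfolding cnt_def by (simp add: card_Un_disjoint)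
qed


lemma bounded_fin: "finite (V::vtx set) \<Longrightarrow> \<exists>R. \<forall>p\<in>V. \<bar>fst p\<bar> \<le> R \<and> \<bar>snd p\<bar> \<le> R"
proof (induction V rule: finite_induct)
  case empty then show ?case by auto
next
  case (insert x F)
  then obtain R where "\<forall>p\<in>F. \<bar>fst p\<bar> \<le> R \<and> \<bar>snd p\<bar> \<le> R" by blast
  then show ?case by (intro exI[of _ "max R (max \<bar>fst x\<bar> \<bar>snd x\<bar>)"]) auto
qed

lemma hK_zero_easy: assumes "\<forall>p\<in>\<Union>K. \<bar>fst p\<bar> \<le> R \<and> \<bar>snd p\<bar> \<le> R"
  and "\<bar>snd z\<bar> > R + 2 \<or> fst z > R"
  shows "\<not> hK K z"
proof -
  have "Vb K (fst z) b = {}" if "b = snd z \<or> b = snd z - 1" for b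
  proof (rule ccontr)
    assume "Vb K (fst z) b \<noteq> {}"
    then obtain a where a: "vdual a b \<in> K" "a \<ge> fst z" unfolding Vb_def by blast
    have "(a+1,b-1) \<in> \<Union>K" "(a+1,b+1) \<in> \<Union>K" using a unfolding vdual_def by auto
    then have "\<bar>a+1\<bar> \<le> R" "\<bar>b-1\<bar> \<le> R" "\<bar>b+1\<bar> \<le> R" using assms(1) by fastforce+
    then show False using a(2) assms(2) that by arith
  qed
  then show ?thesis unfolding hK_def by simp
qed

lemma hK_zero: assumes "\<omega> \<in> Omega" "closedK \<omega> K" "\<forall>p\<in>\<Union>K. \<bar>fst p\<bar> \<le> R \<and> \<bar>snd p\<bar> \<le> R"
  and "\<bar>snd z\<bar> > R + 2 \<or> \<bar>fst z\<bar> > R + 2"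
  shows "\<not> hK K z"
proof (cases "\<bar>snd z\<bar> > R + 2 \<or> fst z > R")
  case True then show ?thesis using hK_zero_easy[OF assms(3)] by blast
next
  case False
  then have fz: "fst z < - R - 2" using assms(4) by arith
  obtain i j where z: "z = (i,j)" by fastforce
  have st: "hK K (i,j') = hK K (i,j'+1)" for j'
  proof -
    have "\<not> (\<exists>d\<in>K. crosses d {(i,j'),(i,j'+1)})"
    proof
      assume "\<exists>d\<in>K. crosses d {(i,j'),(i,j'+1)}"
      then have "hdual i j' \<in> K \<or> hdual (i-1) j' \<in> K" unfolding cross_v by auto
      then have "(i,j') \<in> \<Union>K \<or> (i-1,j') \<in> \<Union>K" unfolding hdual_def by auto
      then show False using assms(3) fz z by fastforce
    qed
    then show ?thesis using vstep[OF assms(1,2)] by blast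
  qed
  have "hK K (i,j) = hK K (i, j + int k)" for k
  proof (induction k)
    case 0 then show ?case by simp
  next
    case (Suc k)
    have eq: "j + int (Suc k) = (j + int k) + 1" by simp
    show ?case unfolding eq using Suc.IH st[of "j + int k"] by (rule trans)
  qed
  from this[of "nat (\<bar>j\<bar> + \<bar>R\<bar> + 3)"] have "hK K (i,j) = hK K (i, j + int (nat (\<bar>j\<bar> + \<bar>R\<bar> + 3)))" .
  moreover have "\<not> hK K (i, j + int (nat (\<bar>j\<bar> + \<bar>R\<bar> + 3)))"
    by (rule hK_zero_easy[OF assms(3)]) auto
  ultimately show ?thesis using z by simp
qed

lemma far_point: assumes "infinite (S::vtx set)" shows "\<exists>z\<in>S. \<bar>fst z\<bar> > B \<or> \<bar>snd z\<bar> > B"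
proof (rule ccontr)
  assume "\<not> ?thesis"
  then have "S \<subseteq> {-B..B} \<times> {-B..B}" by force
  then show False using assms finite_subset by blast
qed

lemma cluster_hK: assumes "\<omega> \<in> Omega" "closedK \<omega> K" "z \<in> cluster \<omega> x"
  shows "hK K z = hK K x"
proof -
  have KP: "K \<subseteq> present \<omega>" using assms(2) unfolding closedK_def by auto
  from assms(3) have "(\<lambda>u v. adjG u v \<and> \<omega> u = \<omega> v)\<^sup>*\<^sup>* x z" unfolding cluster_def by simp
  then show ?thesis
  proof (induction rule: rtranclp_induct)
    case base then show ?case by simp
  next
    case (step u v)
    then have "\<not> (\<exists>d\<in>present \<omega>. crosses d {u,v})" using P_adj[OF assms(1)] by blast
    then have "\<not> (\<exists>d\<in>K. crosses d {u,v})" using KP by blast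
    then show ?case using hK_adj[OF assms(1,2)] step by blast
  qed
qed

lemma inf_cluster_hK: assumes "\<omega> \<in> Omega" "closedK \<omega> K" "in_infinite_cluster \<omega> s x"
  shows "\<not> hK K x"
proof -
  have fK: "finite K" and KP: "K \<subseteq> present \<omega>" using assms(2) unfolding closedK_def by auto
  have "finite (\<Union>K)" using fK KP P_finite by blast
  then obtain R where R: "\<forall>p\<in>\<Union>K. \<bar>fst p\<bar> \<le> R \<and> \<bar>snd p\<bar> \<le> R" using bounded_fin by blast
  from assms(3) have "infinite (cluster \<omega> x)" unfolding in_infinite_cluster_def by simp
  then obtain z where z: "z \<in> cluster \<omega> x" "\<bar>fst z\<bar> > R + 2 \<or> \<bar>snd z\<bar> > R + 2" using far_point by blast
  have "\<not> hK K z" using hK_zero[OF assms(1,2) R] z(2) by blast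
  then show ?thesis using cluster_hK[OF assms(1,2) z(1)] by simp
qed

lemma contour_P: assumes "d \<in> present \<omega>" "f \<in> contour \<omega> d" shows "f \<in> present \<omega>"
proof -
  have "(\<lambda>g h. g \<in> present \<omega> \<and> h \<in> present \<omega> \<and> g \<inter> h \<noteq> {})\<^sup>*\<^sup>* d f"
    using assms(2) unfolding contour_def by simp
  then show ?thesis using assms(1) by (induction rule: rtranclp_induct) auto
qed

lemma contour_sub: "f \<in> contour \<omega> d \<Longrightarrow> contour \<omega> f \<subseteq> contour \<omega> d"
  unfolding contour_def by (auto intro: rtranclp_trans)

lemma Gpath_adj: "Gpath xs \<Longrightarrow> Suc i < length xs \<Longrightarrow> adjG (xs!i) (xs!Suc i)"
  unfolding Gpath_def by blast

lemma part1: assumes om: "\<omega> \<in> Omega" and x: "in_infinite_cluster \<omega> False x" and y: "in_infinite_cluster \<omega> True y"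
  and p: "Gpath xs" "hd xs = x" "last xs = y"
  shows "odd (inf_crossings \<omega> xs)"
proof -
  let ?P = "present \<omega>"
  let ?cI = "\<lambda>u v. \<exists>d. in_infinite_contour \<omega> d \<and> crosses d {u,v}"
  let ?cF = "\<lambda>u v. \<exists>d\<in>?P. \<not> in_infinite_contour \<omega> d \<and> crosses d {u,v}"
  define D where "D = {d. d \<in> ?P \<and> \<not> in_infinite_contour \<omega> d \<and> (\<exists>i. Suc i < length xs \<and> crosses d {xs!i, xs!Suc i})}"
  define K where "K = \<Union> (contour \<omega> ` D)"
  have xs_ne: "xs \<noteq> []" using p unfolding Gpath_def by simp
  have fD: "finite D"
  proof -
    have "D \<subseteq> (\<Union>i\<in>{i. Suc i < length xs}. {d. crosses d {xs!i, xs!Suc i}})" unfolding D_def by blast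
    moreover have "finite (\<Union>i\<in>{i. Suc i < length xs}. {d. crosses d {xs!i, xs!Suc i}})"
    proof (rule finite_UN_I)
      show "finite {i. Suc i < length xs}" by (rule finite_subset[of _ "{..<length xs}"]) auto
    next
      fix i assume "i \<in> {i. Suc i < length xs}"
      then show "finite {d. crosses d {xs!i, xs!Suc i}}" using cross_fin Gpath_adj[OF p(1)] by simp
    qed
    ultimately show ?thesis using finite_subset by blast
  qed
  have fC: "finite (contour \<omega> d)" if "d \<in> D" for d
    using that unfolding D_def in_infinite_contour_def by auto
  have KP: "K \<subseteq> ?P" unfolding K_def D_def using contour_P by blast
  have cK: "closedK \<omega> K" unfolding closedK_def
  proof (intro conjI ballI impI)
    show "K \<subseteq> ?P" by (rule KP)
    show "finite K" unfolding K_def using fD fC by blast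
  next
    fix f f' assume f: "f \<in> K" and f': "f' \<in> ?P" and ne: "f \<inter> f' \<noteq> {}"
    from f obtain d where d: "d \<in> D" "f \<in> contour \<omega> d" unfolding K_def by blast
    have "f \<in> ?P" using f KP by blast
    then have "f' \<in> contour \<omega> d" using d(2) f' ne unfolding contour_def
      by (auto intro: rtranclp.rtrancl_into_rtrancl)
    then show "f' \<in> K" using d(1) unfolding K_def by blast
  qed
  have FK: "?cF (xs!i) (xs!Suc i) \<longleftrightarrow> (\<exists>d\<in>K. crosses d {xs!i, xs!Suc i})" if i: "Suc i < length xs" for i
  proof
    assume "?cF (xs!i) (xs!Suc i)"
    then obtain d where "d \<in> ?P" "\<not> in_infinite_contour \<omega> d" "crosses d {xs!i, xs!Suc i}" by blast
    moreover then have "d \<in> D" unfolding D_def using i by blast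
    moreover have "d \<in> contour \<omega> d" unfolding contour_def by simp
    ultimately show "\<exists>d\<in>K. crosses d {xs!i, xs!Suc i}" unfolding K_def by blast
  next
    assume "\<exists>d\<in>K. crosses d {xs!i, xs!Suc i}"
    then obtain f d where f: "f \<in> contour \<omega> d" "d \<in> D" "crosses f {xs!i, xs!Suc i}" unfolding K_def by blast
    have "f \<in> ?P" using f KP unfolding K_def by blast
    moreover have "finite (contour \<omega> f)" using contour_sub[OF f(1)] fC[OF f(2)] finite_subset by blast
    ultimately show "?cF (xs!i) (xs!Suc i)" using f(3) unfolding in_infinite_contour_def by blast
  qed
  have e1: "inf_crossings \<omega> xs = cnt ?cI xs" unfolding inf_crossings_def cnt_def by simp
  have e2: "cnt (\<lambda>u v. \<omega> u \<noteq> \<omega> v) xs = cnt (\<lambda>u v. ?cI u v \<or> ?cF u v) xs"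
  proof (rule cnt_cong)
    fix i assume "Suc i < length xs"
    then have "(\<exists>d\<in>?P. crosses d {xs!i, xs!Suc i}) \<longleftrightarrow> \<omega> (xs!i) \<noteq> \<omega> (xs!Suc i)"
      using P_adj[OF om] Gpath_adj[OF p(1)] by blast
    then show "\<omega> (xs!i) \<noteq> \<omega> (xs!Suc i) \<longleftrightarrow> ?cI (xs!i) (xs!Suc i) \<or> ?cF (xs!i) (xs!Suc i)"
      unfolding in_infinite_contour_def by blast
  qed
  have e3: "cnt (\<lambda>u v. ?cI u v \<or> ?cF u v) xs = cnt ?cI xs + cnt ?cF xs"
  proof (rule cnt_disj)
    fix i assume "Suc i < length xs"
    then have "\<forall>d d'. crosses d {xs!i, xs!Suc i} \<and> crosses d' {xs!i, xs!Suc i} \<longrightarrow> d = d'"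
      using cross_unique Gpath_adj[OF p(1)] by blast
    then show "\<not> (?cI (xs!i) (xs!Suc i) \<and> ?cF (xs!i) (xs!Suc i))" by blast
  qed
  have e4: "cnt ?cF xs = cnt (\<lambda>u v. hK K u \<noteq> hK K v) xs"
  proof (rule cnt_cong)
    fix i assume i: "Suc i < length xs"
    show "?cF (xs!i) (xs!Suc i) \<longleftrightarrow> hK K (xs!i) \<noteq> hK K (xs!Suc i)"
      using FK[OF i] hK_adj[OF om cK Gpath_adj[OF p(1) i]] by blast
  qed
  obtain z zs where zs: "xs = z # zs" using xs_ne by (cases xs) auto
  have hz: "\<omega> z = False" "\<omega> (last (z#zs)) = True" using x y p zs unfolding in_infinite_cluster_def by auto
  have o1: "odd (cnt (\<lambda>u v. \<omega> u \<noteq> \<omega> v) xs)"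
    unfolding zs using cnt_parity[of \<omega> z zs] hz by simp
  have o2: "even (cnt (\<lambda>u v. hK K u \<noteq> hK K v) xs)"
    unfolding zs using cnt_parity[of "hK K" z zs] inf_cluster_hK[OF om cK x] inf_cluster_hK[OF om cK y] p zs by auto
  show ?thesis using o1 o2 e1 e2 e3 e4 by simp
qed

lemma Gpath_Cons: "Gpath ys \<Longrightarrow> adjG u (hd ys) \<Longrightarrow> Gpath (u # ys)"
  unfolding Gpath_def
proof (intro conjI allI impI)
  fix i assume a: "ys \<noteq> [] \<and> (\<forall>i. Suc i < length ys \<longrightarrow> adjG (ys ! i) (ys ! Suc i))" "adjG u (hd ys)"
    and i: "Suc i < length (u # ys)"
  show "adjG ((u # ys) ! i) ((u # ys) ! Suc i)"
  proof (cases i)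
    case 0 then show ?thesis using a by (cases ys) auto
  next
    case (Suc k) then show ?thesis using a i by auto
  qed
qed simp

lemma path_exists: "\<exists>xs. Gpath xs \<and> hd xs = u \<and> last xs = v"
proof (induction "nat (\<bar>fst u - fst v\<bar> + \<bar>snd u - snd v\<bar>)" arbitrary: u rule: less_induct)
  case less
  show ?case
  proof (cases "u = v")
    case True
    then show ?thesis by (intro exI[of _ "[u]"]) (auto simp: Gpath_def)
  next
    case False
    obtain a b c e where u: "u = (a,b)" and v: "v = (c,e)" by fastforce
    define w where "w = (if a < c then (a+1,b) else if c < a then (a-1,b) else if b < e then (a,b+1) else (a,b-1))"
    have aw: "adjG u w" unfolding w_def u adjG_def by auto
    have "nat (\<bar>fst w - fst v\<bar> + \<bar>snd w - snd v\<bar>) < nat (\<bar>fst u - fst v\<bar> + \<bar>snd u - snd v\<bar>)"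
      using False unfolding w_def u v by auto
    then obtain ys where ys: "Gpath ys" "hd ys = w" "last ys = v" using less by blast
    have "ys \<noteq> []" using ys unfolding Gpath_def by simp
    then show ?thesis using ys aw Gpath_Cons[OF ys(1)] by (intro exI[of _ "u # ys"]) auto
  qed
qed

theorem lemma2p8:
  fixes \<omega> :: "int \<times> int \<Rightarrow> bool"
  assumes "\<omega> \<in> Omega"
  shows "(\<forall>x y xs. in_infinite_cluster \<omega> False x \<and> in_infinite_cluster \<omega> True y \<and>
            Gpath xs \<and> hd xs = x \<and> last xs = y \<longrightarrow> odd (inf_crossings \<omega> xs))
       \<and> ((\<exists>x. in_infinite_cluster \<omega> False x) \<and> (\<exists>y. in_infinite_cluster \<omega> True y)
            \<longrightarrow> (\<exists>e. in_infinite_contour \<omega> e))"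
proof (intro conjI allI impI)
  fix x y xs assume "in_infinite_cluster \<omega> False x \<and> in_infinite_cluster \<omega> True y \<and>
            Gpath xs \<and> hd xs = x \<and> last xs = y"
  then show "odd (inf_crossings \<omega> xs)" using part1[OF assms] by blast
next
  assume "(\<exists>x. in_infinite_cluster \<omega> False x) \<and> (\<exists>y. in_infinite_cluster \<omega> True y)"
  then obtain x y where xy: "in_infinite_cluster \<omega> False x" "in_infinite_cluster \<omega> True y" by blast
  obtain xs where p: "Gpath xs" "hd xs = x" "last xs = y" using path_exists by blast
  have "odd (inf_crossings \<omega> xs)" using part1[OF assms xy p] .
  then have "inf_crossings \<omega> xs \<noteq> 0" by (metis dvd_0_right)
  then have "{i. Suc i < length xs \<and>
     (\<exists>d. in_infinite_contour \<omega> d \<and> crosses d {xs ! i, xs ! Suc i})} \<noteq> {}"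
    unfolding inf_crossings_def by (metis card.empty)
  then show "\<exists>e. in_infinite_contour \<omega> e" by blast
qed

end
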